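(* (1) Let $R\subseteq S$ be rings with $S$ a free left $R$-module on a basis $T_S$, let $\alpha$ be a ring automorphism of $S$ and $\delta$ an $\alpha$-derivation of $S$, and let $S[x;\alpha,\delta]$ be the Ore extension. Let $0\ne g\in S[x;\alpha,\delta]$ and $p=\operatorname{lc}_S(g)$. Suppose that $p$ is $R$-nice and $\operatorname{ann}_R(p)=\operatorname{ann}_R(g)$ (this holds in particular whenever $g$ is $R$-nice), and that $\operatorname{ann}_S(p)=S\operatorname{ann}_R(p)$. Then $\operatorname{ann}_{S[x;\alpha,\delta]}(g)=S[x;\alpha,\delta]\operatorname{ann}_R(g)$. (2) Let $\mathbb S=R[X;\boldsymbol\alpha,\boldsymbol\delta]$ be a skew polynomial ring of bijective type over a well-ordered set of variables. Then every $R$-nice element $g\in\mathbb S$ satisfies $\operatorname{ann}_{\mathbb S}(g)=\mathbb S\operatorname{ann}_R(g)$.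
   Context: All annihilators are left annihilators: $\operatorname{ann}_B(u)=\{b\in B: bu=0\}$. Ore extension: $S[x;\alpha,\delta]$ is the free left $S$-module with basis $\{x^n:n\in\mathbb N\}$ and multiplication determined by $xs=\alpha(s)x+\delta(s)$, where $\delta(ab)=\alpha(a)\delta(b)+\delta(a)b$. Each $f\in S[x;\alpha,\delta]$ is uniquely $f=\sum_k p_kx^k$ with $p_k\in S$; $\deg_x(f)$ is the largest $k$ with $p_k\ne0$ and $\operatorname{lc}_S(f)=p_{\deg_x f}$. $S[x;\alpha,\delta]$ is a free left $R$-module with basis $\{\lambda x^n:\lambda\in T_S,n\in\mathbb N\}$. A non-zero element $f$ of a ring that is a free left $R$-module with a fixed basis is $R$-nice if, writing $f=\sum_i a_i\lambda_i$ with distinct basis elements $\lambda_i$ and non-zero $a_i\in R$, all the $\operatorname{ann}_R(a_i)$ coincide. Setting (M) for part (2): $R$ a ring, $\Omega$ an ordinal, $X=\{x_s:s<\Omega\}$; $T_\kappa$ the standard terms $x_{s_1}\cdots x_{s_n}$ with $s_1\le\cdots\le s_n<\kappa$, $T=T_\Omega$; $\mathbb S$ has subrings $\mathbb S_\kappa$ ($\kappa\le\Omega$) with $\mathbb S_0=R$, $\mathbb S_\Omega=\mathbb S$, $\mathbb S_\kappa$ free as left $R$-module on $T_\kappa$, $\mathbb S_{\kappa+1}=\mathbb S_\kappa[x_\kappa;\alpha_\kappa,\delta_\kappa]$ an Ore extension with $\alpha_\kappa$ an automorphism of $\mathbb S_\kappa$ and $\delta_\kappa$ an $\alpha_\kappa$-derivation,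 and $\mathbb S_\kappa=\bigcup_{\eta<\kappa}\mathbb S_\eta$ for limit $\kappa$; $R$-niceness in $\mathbb S$ refers to the basis $T$. *)

theory Defs
  imports Main
begin

text \<open>All rings live inside one ambient type of class ring_1; the rings of the paper
are subrings (subsets) of it.\<close>

definition is_subring :: "'a::ring_1 set \<Rightarrow> bool" where
  "is_subring R \<longleftrightarrow> 1 \<in> R \<and> (\<forall>a\<in>R. \<forall>b\<in>R. a + b \<in> R \<and> a - b \<in> R \<and> a * b \<in> R)"

definition ann :: "'a::ring_1 set \<Rightarrow> 'a \<Rightarrow> 'a set" where
  "ann B u = {b \<in> B. b * u = 0}"

text \<open>B X : the left ideal / left B-submodule generated by X (finite sums of products).\<close>
definition lspan :: "'a::ring_1 set \<Rightarrow> 'a set \<Rightarrow> 'a set" where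
  "lspan B X = {y. \<exists>(n::nat) s a. (\<forall>i<n. s i \<in> B \<and> a i \<in> X) \<and> y = (\<Sum>i<n. s i * a i)}"

definition is_coeffs :: "'a::ring_1 set \<Rightarrow> 'a set \<Rightarrow> ('a \<Rightarrow> 'a) \<Rightarrow> bool" where
  "is_coeffs R B c \<longleftrightarrow> finite {b. c b \<noteq> 0} \<and> (\<forall>b. c b \<noteq> 0 \<longrightarrow> b \<in> B \<and> c b \<in> R)"

definition lin_comb :: "('a::ring_1 \<Rightarrow> 'a) \<Rightarrow> 'a" where
  "lin_comb c = (\<Sum>b\<in>{b. c b \<noteq> 0}. c b * b)"

definition free_on :: "'a::ring_1 set \<Rightarrow> 'a set \<Rightarrow> 'a set \<Rightarrow> bool" where
  "free_on R M B \<longleftrightarrow> B \<subseteq> M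
     \<and> (\<forall>m. m \<in> M \<longleftrightarrow> (\<exists>c. is_coeffs R B c \<and> m = lin_comb c))
     \<and> (\<forall>c c'. is_coeffs R B c \<longrightarrow> is_coeffs R B c' \<longrightarrow> lin_comb c = lin_comb c' \<longrightarrow> c = c')"

definition coef :: "'a::ring_1 set \<Rightarrow> 'a set \<Rightarrow> 'a \<Rightarrow> 'a \<Rightarrow> 'a" where
  "coef R B m = (THE c. is_coeffs R B c \<and> m = lin_comb c)"

definition nice :: "'a::ring_1 set \<Rightarrow> 'a set \<Rightarrow> 'a set \<Rightarrow> 'a \<Rightarrow> bool" where
  "nice R M B f \<longleftrightarrow> f \<in> M \<and> f \<noteq> 0 \<and>
     (\<forall>b b'. coef R B f b \<noteq> 0 \<longrightarrow> coef R B f b' \<noteq> 0 \<longrightarrow>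
        ann R (coef R B f b) = ann R (coef R B f b'))"

definition powers :: "'a::ring_1 \<Rightarrow> 'a set" where
  "powers x = range (\<lambda>n::nat. x ^ n)"

definition ore_ext :: "'a::ring_1 set \<Rightarrow> 'a set \<Rightarrow> 'a \<Rightarrow> ('a \<Rightarrow> 'a) \<Rightarrow> ('a \<Rightarrow> 'a) \<Rightarrow> bool" where
  "ore_ext S A x \<alpha> \<delta> \<longleftrightarrow>
     is_subring S \<and> is_subring A \<and> S \<subseteq> A \<and> x \<in> A \<and>
     bij_betw \<alpha> S S \<and> \<alpha> 1 = 1 \<and>
     (\<forall>a\<in>S. \<forall>b\<in>S. \<alpha> (a + b) = \<alpha> a + \<alpha> b \<and> \<alpha> (a * b) = \<alpha> a * \<alpha> b) \<and>
     (\<forall>a\<in>S. \<delta> a \<in> S) \<and>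
     (\<forall>a\<in>S. \<forall>b\<in>S. \<delta> (a + b) = \<delta> a + \<delta> b \<and> \<delta> (a * b) = \<alpha> a * \<delta> b + \<delta> a * b) \<and>
     inj (\<lambda>n::nat. x ^ n) \<and> free_on S A (powers x) \<and>
     (\<forall>s\<in>S. x * s = \<alpha> s * x + \<delta> s)"

definition ore_deg :: "'a::ring_1 set \<Rightarrow> 'a \<Rightarrow> 'a \<Rightarrow> nat" where
  "ore_deg S x g = (GREATEST n. coef S (powers x) g (x ^ n) \<noteq> 0)"

definition ore_lc :: "'a::ring_1 set \<Rightarrow> 'a \<Rightarrow> 'a \<Rightarrow> 'a" where
  "ore_lc S x g = coef S (powers x) g (x ^ ore_deg S x g)"

definition std_terms :: "('i::linorder \<Rightarrow> 'a::ring_1) \<Rightarrow> 'i set \<Rightarrow> 'a set" where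
  "std_terms x D = {prod_list (map x xs) | xs. sorted xs \<and> set xs \<subseteq> D}"

text \<open>The ordinal Omega is represented by a well-ordered index type 'i;
  ordinals kappa < Omega by elements of 'i, S_kappa by Sk {s. s < kappa},
  S_{kappa+1} by Sk {s. s \<le> kappa}, and S_Omega by Sk UNIV.\<close>
definition skew_setting ::
  "'a::ring_1 set \<Rightarrow> ('i::wellorder \<Rightarrow> 'a) \<Rightarrow> ('i \<Rightarrow> 'a \<Rightarrow> 'a) \<Rightarrow> ('i \<Rightarrow> 'a \<Rightarrow> 'a)
     \<Rightarrow> ('i set \<Rightarrow> 'a set) \<Rightarrow> bool" where
  "skew_setting R x \<alpha> \<delta> Sk \<longleftrightarrow>
     is_subring R \<and> is_subring (Sk UNIV) \<and> Sk {} = R \<and>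
     inj_on (\<lambda>xs. prod_list (map x xs)) {xs. sorted xs} \<and>
     (\<forall>\<kappa>. free_on R (Sk {s. s < \<kappa>}) (std_terms x {s. s < \<kappa>})) \<and>
     free_on R (Sk UNIV) (std_terms x UNIV) \<and>
     (\<forall>\<kappa>. ore_ext (Sk {s. s < \<kappa>}) (Sk {s. s \<le> \<kappa>}) (x \<kappa>) (\<alpha> \<kappa>) (\<delta> \<kappa>)) \<and>
     (\<forall>\<kappa>. ((\<exists>\<eta>. \<eta> < \<kappa>) \<and> (\<forall>\<eta><\<kappa>. \<exists>\<eta>'<\<kappa>. \<eta> < \<eta>'))
            \<longrightarrow> Sk {s. s < \<kappa>} = (\<Union>\<eta>\<in>{\<eta>. \<eta> < \<kappa>}. Sk {s. s < \<eta>})) \<and>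
     ((\<forall>\<eta>::'i. \<exists>\<eta>'. \<eta> < \<eta>') \<longrightarrow> Sk UNIV = (\<Union>\<eta>. Sk {s. s < \<eta>}))"

end

theory Submission
  imports Defs
begin


lemma subring_0: "is_subring S \<Longrightarrow> 0 \<in> S"
  unfolding is_subring_def by (metis diff_self)

lemma subring_add: "is_subring S \<Longrightarrow> a \<in> S \<Longrightarrow> b \<in> S \<Longrightarrow> a + b \<in> S"
  unfolding is_subring_def by blast
lemma subring_diff: "is_subring S \<Longrightarrow> a \<in> S \<Longrightarrow> b \<in> S \<Longrightarrow> a - b \<in> S"
  unfolding is_subring_def by blast
lemma subring_mult: "is_subring S \<Longrightarrow> a \<in> S \<Longrightarrow> b \<in> S \<Longrightarrow> a * b \<in> S"
  unfolding is_subring_def by blast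
lemma subring_1: "is_subring S \<Longrightarrow> 1 \<in> S"
  unfolding is_subring_def by blast
lemma subring_uminus: "is_subring S \<Longrightarrow> a \<in> S \<Longrightarrow> - a \<in> S"
  using subring_diff[of S 0 a] subring_0[of S] by simp
lemma subring_power: "is_subring S \<Longrightarrow> a \<in> S \<Longrightarrow> a ^ n \<in> S"
  by (induction n) (auto intro: subring_1 subring_mult)
lemma subring_sum: "is_subring S \<Longrightarrow> (\<And>i. i \<in> I \<Longrightarrow> f i \<in> S) \<Longrightarrow> sum f I \<in> S"
proof (induction I rule: infinite_finite_induct)
  case (infinite A) then show ?case by (simp add: subring_0)
next
  case empty then show ?case by (simp add: subring_0)
next
  case (insert a F) then show ?case by (simp add: subring_add)
qed

lemma lin_comb_eq:
  assumes "finite F" "{b. c b \<noteq> 0} \<subseteq> F"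
  shows "lin_comb c = (\<Sum>b\<in>F. c b * b)"
  unfolding lin_comb_def
  by (rule sum.mono_neutral_left) (use assms in auto)

lemma lin_comb_zero: "lin_comb (\<lambda>_. 0) = 0"
  unfolding lin_comb_def by simp

lemma is_coeffs_zero: "is_coeffs R B (\<lambda>_. 0)"
  unfolding is_coeffs_def by simp

lemma free_coef:
  assumes "free_on R M B" "m \<in> M"
  shows "is_coeffs R B (coef R B m) \<and> m = lin_comb (coef R B m)"
proof -
  from assms obtain c where c: "is_coeffs R B c \<and> m = lin_comb c"
    unfolding free_on_def by blast
  have uniq: "\<And>c'. is_coeffs R B c' \<and> m = lin_comb c' \<Longrightarrow> c' = c"
    using assms(1) c unfolding free_on_def by metis
  have "coef R B m = c" unfolding coef_def by (rule the_equality) (use c uniq in blast)+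
  then show ?thesis using c by simp
qed

lemma free_coef_eq:
  assumes "free_on R M B" "is_coeffs R B c"
  shows "coef R B (lin_comb c) = c"
proof -
  have m: "lin_comb c \<in> M" using assms unfolding free_on_def by blast
  from free_coef[OF assms(1) m] have "is_coeffs R B (coef R B (lin_comb c))"
     "lin_comb c = lin_comb (coef R B (lin_comb c))" by auto
  then show ?thesis using assms unfolding free_on_def by metis
qed

lemma free_coef_mono:
  assumes "free_on R M B" "free_on R M' B'" "B \<subseteq> B'" "m \<in> M"
  shows "coef R B' m = coef R B m"
proof -
  from free_coef[OF assms(1,4)] have c: "is_coeffs R B (coef R B m)" "m = lin_comb (coef R B m)" by auto
  have "is_coeffs R B' (coef R B m)" using c(1) assms(3) unfolding is_coeffs_def by blast
  from free_coef_eq[OF assms(2) this] c(2) show ?thesis by simp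
qed

lemma nice_mono:
  assumes "free_on R M B" "free_on R M' B'" "B \<subseteq> B'" "M \<subseteq> M'" "m \<in> M"
  shows "nice R M' B' m = nice R M B m"
  unfolding nice_def using free_coef_mono[OF assms(1-3,5)] assms(4,5) by auto

lemma coef_zero:
  assumes "free_on R M B" shows "coef R B 0 = (\<lambda>_. 0)"
  using free_coef_eq[OF assms is_coeffs_zero] by (simp add: lin_comb_zero)

lemma free_ann:
  assumes R: "is_subring R" and F: "free_on R M B" and m: "m \<in> M" and r: "r \<in> R"
  shows "(r * m = 0) = (\<forall>b. r * coef R B m b = 0)"
proof -
  define c where "c = coef R B m"
  from free_coef[OF F m] have c: "is_coeffs R B c" "m = lin_comb c" unfolding c_def by auto
  have fin: "finite {b. c b \<noteq> 0}" using c(1) unfolding is_coeffs_def by blast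
  have sub: "{b. r * c b \<noteq> 0} \<subseteq> {b. c b \<noteq> 0}" by auto
  have rc: "is_coeffs R B (\<lambda>b. r * c b)"
    unfolding is_coeffs_def
  proof (intro conjI allI impI)
    show "finite {b. r * c b \<noteq> 0}" using finite_subset[OF sub fin] .
  next
    fix b assume "r * c b \<noteq> 0"
    then have "c b \<noteq> 0" by auto
    then show "b \<in> B" using c(1) unfolding is_coeffs_def by auto
  next
    fix b assume "r * c b \<noteq> 0"
    then have "c b \<noteq> 0" by auto
    then show "r * c b \<in> R" using c(1) R r unfolding is_coeffs_def by (auto intro: subring_mult)
  qed
  have "r * m = (\<Sum>b\<in>{b. c b \<noteq> 0}. (r * c b) * b)"
    using c(2) unfolding lin_comb_def by (simp add: sum_distrib_left mult.assoc)
  also have "\<dots> = lin_comb (\<lambda>b. r * c b)"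
    by (rule lin_comb_eq[symmetric]) (use fin in auto)
  finally have eq: "r * m = lin_comb (\<lambda>b. r * c b)" .
  show ?thesis
  proof
    assume "r * m = 0"
    then have "lin_comb (\<lambda>b. r * c b) = lin_comb (\<lambda>_. 0)" using eq lin_comb_zero by simp
    then have "(\<lambda>b. r * c b) = (\<lambda>_. 0)" using F rc is_coeffs_zero unfolding free_on_def by blast
    then show "\<forall>b. r * coef R B m b = 0" unfolding c_def by metis
  next
    assume "\<forall>b. r * coef R B m b = 0"
    then have "(\<lambda>b. r * c b) = (\<lambda>_. 0)" unfolding c_def by auto
    then show "r * m = 0" using eq lin_comb_zero by simp
  qed
qed

lemma nice_ex:
  assumes F: "free_on R M B" and n: "nice R M B m"
  shows "\<exists>b. coef R B m b \<noteq> 0"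
proof (rule ccontr)
  assume "\<not> ?thesis"
  then have "coef R B m = (\<lambda>_. 0)" by auto
  moreover have "m = lin_comb (coef R B m)" using free_coef[OF F] n unfolding nice_def by blast
  ultimately have "m = 0" using lin_comb_zero by simp
  then show False using n unfolding nice_def by simp
qed

lemma nice_ann:
  assumes R: "is_subring R" and F: "free_on R M B" and n: "nice R M B m"
    and b: "coef R B m b \<noteq> 0"
  shows "ann R m = ann R (coef R B m b)"
proof -
  have m: "m \<in> M" using n unfolding nice_def by blast
  have eqs: "\<And>b'. coef R B m b' \<noteq> 0 \<Longrightarrow> ann R (coef R B m b') = ann R (coef R B m b)"
    using n b unfolding nice_def by blast
  show ?thesis
  proof (intro set_eqI iffI)
    fix r assume "r \<in> ann R m"
    then have "r \<in> R" "r * m = 0" unfolding ann_def by auto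
    then show "r \<in> ann R (coef R B m b)" using free_ann[OF R F m] unfolding ann_def by auto
  next
    fix r assume r: "r \<in> ann R (coef R B m b)"
    then have rR: "r \<in> R" unfolding ann_def by auto
    have "\<forall>b'. r * coef R B m b' = 0"
    proof
      fix b' show "r * coef R B m b' = 0"
      proof (cases "coef R B m b' = 0")
        case False then show ?thesis using eqs[OF False] r unfolding ann_def by auto
      qed simp
    qed
    then show "r \<in> ann R m" using free_ann[OF R F m rR] rR unfolding ann_def by auto
  qed
qed

lemma free_sub:
  assumes F: "free_on R M B" and one: "1 \<in> B" shows "R \<subseteq> M"
proof
  fix r assume r: "r \<in> R"
  define c where "c = (\<lambda>b::'a. if b = 1 then r else 0)"
  have "is_coeffs R B c" unfolding is_coeffs_def c_def using r one by auto
  moreover have "lin_comb c = r" by (subst lin_comb_eq[of "{1}"]) (auto simp: c_def)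
  ultimately show "r \<in> M" using F unfolding free_on_def by metis
qed

lemma lspan_zero: "0 \<in> lspan B X"
  unfolding lspan_def by (rule CollectI, rule exI[of _ 0]) simp

lemma lspan_mem: "s \<in> B \<Longrightarrow> a \<in> X \<Longrightarrow> s * a \<in> lspan B X"
  unfolding lspan_def by (rule CollectI, rule exI[of _ 1], rule exI[of _ "\<lambda>_. s"], rule exI[of _ "\<lambda>_. a"]) simp

lemma sum_split_add: "(\<Sum>i<n+m. f i) = (\<Sum>i<n. f i) + (\<Sum>i<m. f (n+i::nat))"
  by (induction m) (simp_all add: add.assoc)

lemma lspan_add:
  assumes "u \<in> lspan B X" "v \<in> lspan B X" shows "u + v \<in> lspan B X"
proof -
  from assms(1) obtain n :: nat and s a where u: "\<forall>i<n. s i \<in> B \<and> a i \<in> X" "u = (\<Sum>i<n. s i * a i)"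
    unfolding lspan_def by (simp only: mem_Collect_eq) blast
  from assms(2) obtain m :: nat and t b where v: "\<forall>i<m. t i \<in> B \<and> b i \<in> X" "v = (\<Sum>i<m. t i * b i)"
    unfolding lspan_def by (simp only: mem_Collect_eq) blast
  define s' where "s' = (\<lambda>i. if i < n then s i else t (i - n))"
  define a' where "a' = (\<lambda>i. if i < n then a i else b (i - n))"
  have "(\<Sum>i<n+m. s' i * a' i) = (\<Sum>i<n. s' i * a' i) + (\<Sum>i<m. s' (n+i) * a' (n+i))"
    by (rule sum_split_add)
  also have "\<dots> = u + v" using u v by (simp add: s'_def a'_def)
  finally have "u + v = (\<Sum>i<n+m. s' i * a' i)" by simp
  moreover have "\<forall>i<n+m. s' i \<in> B \<and> a' i \<in> X" using u v by (auto simp: s'_def a'_def)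
  ultimately show ?thesis unfolding lspan_def by blast
qed

lemma lspan_mono: "B \<subseteq> B' \<Longrightarrow> lspan B X \<subseteq> lspan B' X"
  unfolding lspan_def by blast

lemma lspan_lmul:
  assumes A: "is_subring A" "S \<subseteq> A" "t \<in> A" "u \<in> lspan S X"
  shows "t * u \<in> lspan A X"
proof -
  from assms(4) obtain n :: nat and s a where u: "\<forall>i<n. s i \<in> S \<and> a i \<in> X" "u = (\<Sum>i<n. s i * a i)"
    unfolding lspan_def by (simp only: mem_Collect_eq) blast
  have "t * u = (\<Sum>i<n. (t * s i) * a i)" using u by (simp add: sum_distrib_left mult.assoc)
  moreover have "\<forall>i<n. t * s i \<in> A \<and> a i \<in> X" using u A by (auto intro: subring_mult)
  ultimately show ?thesis unfolding lspan_def
    by (intro CollectI exI[of _ n] exI[of _ "\<lambda>i. t * s i"] exI[of _ a]) auto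
qed

lemma lspan_ann_sub:
  assumes M: "is_subring M" "R \<subseteq> M"
  shows "lspan M (ann R g) \<subseteq> ann M g"
proof
  fix y assume "y \<in> lspan M (ann R g)"
  then obtain n :: nat and s a where y: "\<forall>i<n. s i \<in> M \<and> a i \<in> ann R g" "y = (\<Sum>i<n. s i * a i)"
    unfolding lspan_def by (simp only: mem_Collect_eq) blast
  have "y \<in> M" using y M unfolding ann_def by (auto intro!: subring_sum subring_mult)
  moreover have "y * g = 0" using y unfolding ann_def by (simp add: sum_distrib_right mult.assoc)
  ultimately show "y \<in> ann M g" unfolding ann_def by simp
qed

lemma ann_eq_lspan:
  assumes "is_subring M" "R \<subseteq> M" "ann M g \<subseteq> lspan M (ann R g)"
  shows "ann M g = lspan M (ann R g)"
  using lspan_ann_sub[OF assms(1,2)] assms(3) by blast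



locale ore =
  fixes S A :: "'a::ring_1 set" and x :: 'a and \<alpha> \<delta> :: "'a \<Rightarrow> 'a"
  assumes ore: "ore_ext S A x \<alpha> \<delta>"
begin

lemma subS: "is_subring S" using ore unfolding ore_ext_def by blast
lemma subA: "is_subring A" using ore unfolding ore_ext_def by blast
lemma SA: "S \<subseteq> A" using ore unfolding ore_ext_def by blast
lemma xA: "x \<in> A" using ore unfolding ore_ext_def by blast
lemma bij: "bij_betw \<alpha> S S" using ore unfolding ore_ext_def by blast
lemma \<alpha>mult: "\<And>a b. a \<in> S \<Longrightarrow> b \<in> S \<Longrightarrow> \<alpha> (a * b) = \<alpha> a * \<alpha> b"
  using ore unfolding ore_ext_def by blast
lemma \<alpha>add: "\<And>a b. a \<in> S \<Longrightarrow> b \<in> S \<Longrightarrow> \<alpha> (a + b) = \<alpha> a + \<alpha> b"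
  using ore unfolding ore_ext_def by blast
lemma \<delta>S: "\<And>a. a \<in> S \<Longrightarrow> \<delta> a \<in> S" using ore unfolding ore_ext_def by blast
lemma injx: "inj (\<lambda>n::nat. x ^ n)" using ore unfolding ore_ext_def by blast
lemma free: "free_on S A (powers x)" using ore unfolding ore_ext_def by blast
lemma comm: "\<And>s. s \<in> S \<Longrightarrow> x * s = \<alpha> s * x + \<delta> s" using ore unfolding ore_ext_def by blast

lemma \<alpha>S: "a \<in> S \<Longrightarrow> \<alpha> a \<in> S"
  by (rule bij_betw_apply[OF bij])

lemma \<alpha>0: "\<alpha> 0 = 0"
proof -
  have "\<alpha> (0 + 0) = \<alpha> 0 + \<alpha> 0" using \<alpha>add[of 0 0] subring_0[OF subS] by blast
  then have "\<alpha> 0 + \<alpha> 0 = \<alpha> 0" by (simp only: add_0_left)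
  then show ?thesis by (simp only: add_cancel_left_right)
qed

lemma xpowA: "x ^ n \<in> A"
  using subring_power[OF subA xA] .

lemma nontriv: "(1::'a) \<noteq> 0"
proof
  assume h: "(1::'a) = 0"
  have z: "\<And>a::'a. a = 0"
  proof -
    fix a :: 'a
    have "a = a * 1" by simp
    also have "\<dots> = 0" using h by simp
    finally show "a = 0" .
  qed
  have "x ^ (0::nat) = x ^ (1::nat)" using z[of "x ^ 0"] z[of "x ^ 1"] by simp
  then have "(0::nat) = 1" using injD[OF injx] by blast
  then show False by simp
qed

definition cf :: "'a \<Rightarrow> nat \<Rightarrow> 'a" where
  "cf u n = coef S (powers x) u (x ^ n)"

lemma K1:
  assumes s: "\<And>j. s j \<in> S"
  shows "cf (\<Sum>j<N. s j * x ^ j) n = (if n < N then s n else 0)"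
proof -
  let ?h = "\<lambda>j::nat. x ^ j"
  define c where "c = (\<lambda>b. if b \<in> ?h ` {..<N} then s (inv_into {..<N} ?h b) else 0)"
  have inj: "inj_on ?h {..<N}" by (rule inj_on_subset[OF injx]) simp
  have cx: "\<And>j. c (x ^ j) = (if j < N then s j else 0)"
  proof -
    fix j
    show "c (x ^ j) = (if j < N then s j else 0)"
    proof (cases "j < N")
      case True
      have im: "x ^ j \<in> ?h ` {..<N}" using True by blast
      have iv: "inv_into {..<N} ?h (x ^ j) = j" using inv_into_f_f[OF inj, of j] True by simp
      show ?thesis using im iv True unfolding c_def by simp
    next
      case False
      have "x ^ j \<notin> ?h ` {..<N}"
      proof
        assume "x ^ j \<in> ?h ` {..<N}"
        then obtain i where i: "i < N" "x ^ j = x ^ i" by blast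
        then have "j = i" using injD[OF injx] by blast
        then show False using False i by simp
      qed
      then show ?thesis using False unfolding c_def by simp
    qed
  qed
  have sub: "{b. c b \<noteq> 0} \<subseteq> ?h ` {..<N}" unfolding c_def by auto
  have ic: "is_coeffs S (powers x) c"
    unfolding is_coeffs_def
  proof (intro conjI allI impI)
    show "finite {b. c b \<noteq> 0}" using finite_subset[OF sub] by blast
  next
    fix b assume "c b \<noteq> 0"
    then have "b \<in> ?h ` {..<N}" using sub by blast
    then show "b \<in> powers x" unfolding powers_def by blast
  next
    fix b assume "c b \<noteq> 0"
    then show "c b \<in> S" unfolding c_def using s by (cases "b \<in> ?h ` {..<N}") simp_all
  qed
  have "lin_comb c = (\<Sum>b\<in>?h ` {..<N}. c b * b)" by (rule lin_comb_eq) (use sub in auto)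
  also have "\<dots> = (\<Sum>j<N. c (x ^ j) * x ^ j)" by (subst sum.reindex[OF inj]) simp
  also have "\<dots> = (\<Sum>j<N. s j * x ^ j)" by (rule sum.cong) (auto simp: cx)
  finally have "coef S (powers x) (\<Sum>j<N. s j * x ^ j) = c"
    using free_coef_eq[OF free ic] by simp
  then show ?thesis unfolding cf_def using cx by simp
qed

lemma K0:
  assumes u: "u \<in> A"
  shows "(\<forall>n. cf u n \<in> S) \<and> (\<exists>N. (\<forall>n\<ge>N. cf u n = 0) \<and> u = (\<Sum>j<N. cf u j * x ^ j))"
proof -
  let ?h = "\<lambda>j::nat. x ^ j"
  define c where "c = coef S (powers x) u"
  from free_coef[OF free u] have c: "is_coeffs S (powers x) c" "u = lin_comb c" unfolding c_def by auto
  have fin: "finite {b. c b \<noteq> 0}" using c(1) unfolding is_coeffs_def by blast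
  have cS: "\<And>b. c b \<noteq> 0 \<Longrightarrow> b \<in> powers x \<and> c b \<in> S"
    using c(1) unfolding is_coeffs_def by blast
  have cfc: "\<And>n. cf u n = c (x ^ n)" unfolding cf_def c_def ..
  have A1: "\<forall>n. cf u n \<in> S"
  proof
    fix n show "cf u n \<in> S" unfolding cfc using cS[of "x ^ n"] subring_0[OF subS] by (cases "c (x ^ n) = 0") simp_all
  qed
  define J where "J = ?h -` {b. c b \<noteq> 0}"
  have "finite J" unfolding J_def by (rule finite_vimageI[OF fin injx])
  then obtain N where N0: "\<forall>j\<in>J. j < N" using finite_nat_set_iff_bounded by blast
  have z: "\<forall>n\<ge>N. cf u n = 0"
  proof (intro allI impI)
    fix n assume "N \<le> n"
    then have "n \<notin> J" using N0 by (meson leD)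
    then show "cf u n = 0" unfolding cfc J_def by simp
  qed
  have sub: "{b. c b \<noteq> 0} \<subseteq> ?h ` {..<N}"
  proof
    fix b assume b: "b \<in> {b. c b \<noteq> 0}"
    then have "b \<in> powers x" using cS by blast
    then obtain j where j: "b = x ^ j" unfolding powers_def by blast
    then have "j \<in> J" using b unfolding J_def by simp
    then have "j < N" using N0 by blast
    then show "b \<in> ?h ` {..<N}" using j by blast
  qed
  have inj: "inj_on ?h {..<N}" by (rule inj_on_subset[OF injx]) simp
  have "u = (\<Sum>b\<in>?h ` {..<N}. c b * b)" using c(2) lin_comb_eq[OF _ sub] by simp
  also have "\<dots> = (\<Sum>j<N. c (x ^ j) * x ^ j)" by (subst sum.reindex[OF inj]) simp
  also have "\<dots> = (\<Sum>j<N. cf u j * x ^ j)" unfolding cfc ..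
  finally show ?thesis using z A1 by blast
qed

definition P :: "nat \<Rightarrow> 'a set" where
  "P k = {u. \<exists>s. (\<forall>j. s j \<in> S) \<and> u = (\<Sum>j<k. s j * x ^ j)}"

lemma P_A: "u \<in> P k \<Longrightarrow> u \<in> A"
  unfolding P_def using SA by (auto intro!: subring_sum[OF subA] subring_mult[OF subA] xpowA)

lemma P0: "P 0 = {0}"
  unfolding P_def using subring_0[OF subS] by auto

lemma P_zero: "0 \<in> P k"
  unfolding P_def using subring_0[OF subS] by (auto intro!: exI[of _ "\<lambda>_. 0"])

lemma P_add: assumes "u \<in> P k" "v \<in> P k" shows "u + v \<in> P k"
proof -
  from assms obtain s t where "\<forall>j. s j \<in> S" "u = (\<Sum>j<k. s j * x ^ j)"
    "\<forall>j. t j \<in> S" "v = (\<Sum>j<k. t j * x ^ j)" unfolding P_def by blast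
  then show ?thesis unfolding P_def
    by (intro CollectI exI[of _ "\<lambda>j. s j + t j"]) (auto simp: distrib_right sum.distrib intro: subring_add[OF subS])
qed

lemma P_smult: assumes "c \<in> S" "u \<in> P k" shows "c * u \<in> P k"
proof -
  from assms obtain s where "\<forall>j. s j \<in> S" "u = (\<Sum>j<k. s j * x ^ j)" unfolding P_def by blast
  then show ?thesis unfolding P_def using assms(1)
    by (intro CollectI exI[of _ "\<lambda>j. c * s j"]) (auto simp: sum_distrib_left mult.assoc intro: subring_mult[OF subS])
qed

lemma P_uminus: "u \<in> P k \<Longrightarrow> - u \<in> P k"
  using P_smult[of "-1" u k] subring_uminus[OF subS subring_1[OF subS]] by simp

lemma P_diff: "u \<in> P k \<Longrightarrow> v \<in> P k \<Longrightarrow> u - v \<in> P k"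
  using P_add[of u k "- v"] P_uminus[of v k] by simp

lemma P_mono: assumes "k \<le> k'" "u \<in> P k" shows "u \<in> P k'"
proof -
  from assms obtain s where s: "\<forall>j. s j \<in> S" "u = (\<Sum>j<k. s j * x ^ j)" unfolding P_def by blast
  define t where "t = (\<lambda>j. if j < k then s j else 0)"
  have "(\<Sum>j<k'. t j * x ^ j) = (\<Sum>j<k. t j * x ^ j)"
    by (rule sum.mono_neutral_right) (use assms(1) in \<open>auto simp: t_def\<close>)
  also have "\<dots> = u" using s by (simp add: t_def)
  finally show ?thesis unfolding P_def using s subring_0[OF subS]
    by (intro CollectI exI[of _ t]) (auto simp: t_def)
qed

lemma P_mon: assumes "c \<in> S" "j < k" shows "c * x ^ j \<in> P k"
proof -
  define t where "t = (\<lambda>i. if i = j then c else 0)"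
  have "(\<Sum>i<k. t i * x ^ i) = (\<Sum>i<k. if i = j then c * x ^ j else 0)"
    by (rule sum.cong) (auto simp: t_def)
  also have "\<dots> = c * x ^ j" using assms(2) by simp
  finally show ?thesis unfolding P_def using assms(1) subring_0[OF subS]
    by (intro CollectI exI[of _ t]) (auto simp: t_def)
qed

lemma P_Suc: assumes "u \<in> P (Suc k)" shows "\<exists>c\<in>S. \<exists>v\<in>P k. u = c * x ^ k + v"
proof -
  from assms obtain s where s: "\<forall>j. s j \<in> S" "u = (\<Sum>j<Suc k. s j * x ^ j)" unfolding P_def by blast
  have "(\<Sum>j<k. s j * x ^ j) \<in> P k" unfolding P_def using s(1) by blast
  moreover have "u = s k * x ^ k + (\<Sum>j<k. s j * x ^ j)" using s(2) by (simp add: add.commute)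
  ultimately show ?thesis using s(1) by blast
qed

lemma P_top: assumes "c \<in> S" "v \<in> P k" shows "cf (c * x ^ k + v) k = c"
proof -
  from assms obtain s where s: "\<forall>j. s j \<in> S" "v = (\<Sum>j<k. s j * x ^ j)" unfolding P_def by blast
  define t where "t = s(k := c)"
  have e1: "(\<Sum>j<k. t j * x ^ j) = v" using s by (simp add: t_def)
  have "(\<Sum>j<Suc k. t j * x ^ j) = (\<Sum>j<k. t j * x ^ j) + t k * x ^ k" by simp
  also have "\<dots> = c * x ^ k + v" using e1 by (simp add: t_def add.commute)
  finally have e: "(\<Sum>j<Suc k. t j * x ^ j) = c * x ^ k + v" .
  have tS: "\<And>j. t j \<in> S" using s assms(1) by (simp add: t_def)
  show ?thesis using K1[of t "Suc k" k, OF tS] unfolding e by (simp add: t_def)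
qed

lemma P_coef: assumes "c \<in> S" "v \<in> P k" "c' \<in> S" "v' \<in> P k" "c * x ^ k + v = c' * x ^ k + v'"
  shows "c = c'"
  using P_top[OF assms(1,2)] P_top[OF assms(3,4)] assms(5) by simp

lemma P_ex: "u \<in> A \<Longrightarrow> \<exists>k. u \<in> P k"
  using K0[of u] unfolding P_def by blast

lemma P_rx: "u \<in> P k \<Longrightarrow> u * x ^ n \<in> P (k + n)"
proof (induction k arbitrary: u)
  case 0 then show ?case using P0 P_zero by simp
next
  case (Suc k)
  from P_Suc[OF Suc.prems] obtain c v where cv: "c \<in> S" "v \<in> P k" "u = c * x ^ k + v" by blast
  have "c * x ^ (k + n) \<in> P (Suc k + n)" using P_mon[OF cv(1)] by simp
  moreover have "v * x ^ n \<in> P (Suc k + n)" using P_mono[OF _ Suc.IH[OF cv(2)]] by simp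
  ultimately show ?case using cv(3) P_add by (simp add: distrib_right mult.assoc power_add)
qed

lemma P_lx: "u \<in> P k \<Longrightarrow> x * u \<in> P (Suc k)"
proof (induction k arbitrary: u)
  case 0 then show ?case using P0 P_zero by simp
next
  case (Suc k)
  from P_Suc[OF Suc.prems] obtain c v where cv: "c \<in> S" "v \<in> P k" "u = c * x ^ k + v" by blast
  have "x * (c * x ^ k) = \<alpha> c * x ^ Suc k + \<delta> c * x ^ k"
  proof -
    have "x * (c * x ^ k) = (x * c) * x ^ k" by (simp add: mult.assoc)
    also have "\<dots> = (\<alpha> c * x + \<delta> c) * x ^ k" using comm[OF cv(1)] by simp
    also have "\<dots> = \<alpha> c * x ^ Suc k + \<delta> c * x ^ k" by (simp add: distrib_right mult.assoc)
    finally show ?thesis .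
  qed
  moreover have "\<alpha> c * x ^ Suc k \<in> P (Suc (Suc k))" using P_mon[OF \<alpha>S[OF cv(1)], of "Suc k" "Suc (Suc k)"] by simp
  moreover have "\<delta> c * x ^ k \<in> P (Suc (Suc k))" using P_mon[OF \<delta>S[OF cv(1)], of k "Suc (Suc k)"] by simp
  moreover have "x * v \<in> P (Suc (Suc k))" using P_mono[OF _ Suc.IH[OF cv(2)]] by simp
  ultimately show ?case using cv(3) P_add by (simp add: distrib_left)
qed

lemma P_lxp: "u \<in> P k \<Longrightarrow> x ^ m * u \<in> P (k + m)"
proof (induction m arbitrary: u)
  case 0 then show ?case by simp
next
  case (Suc m)
  have "x ^ Suc m * u = x * (x ^ m * u)" by (simp add: mult.assoc)
  then show ?case using P_lx[OF Suc.IH[OF Suc.prems]] by simp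
qed

lemma P_mul: "u \<in> P k \<Longrightarrow> w \<in> P (Suc n) \<Longrightarrow> u * w \<in> P (k + n)"
proof (induction k arbitrary: u)
  case 0 then show ?case using P0 P_zero by simp
next
  case (Suc k)
  from P_Suc[OF Suc.prems(1)] obtain c v where cv: "c \<in> S" "v \<in> P k" "u = c * x ^ k + v" by blast
  have eq: "Suc n + k = Suc k + n" by simp
  have "c * (x ^ k * w) \<in> P (Suc k + n)" using P_smult[OF cv(1) P_lxp[OF Suc.prems(2), of k]] unfolding eq .
  moreover have "v * w \<in> P (Suc k + n)" using P_mono[OF _ Suc.IH[OF cv(2) Suc.prems(2)]] by simp
  ultimately show ?case using cv(3) P_add by (simp add: distrib_right mult.assoc)
qed

abbreviation \<alpha>p :: "nat \<Rightarrow> 'a \<Rightarrow> 'a" where "\<alpha>p k \<equiv> \<alpha> ^^ k"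

lemma \<alpha>pS: "a \<in> S \<Longrightarrow> \<alpha>p k a \<in> S"
  by (induction k) (auto intro: \<alpha>S)

lemma \<alpha>p_mult: "a \<in> S \<Longrightarrow> b \<in> S \<Longrightarrow> \<alpha>p k (a * b) = \<alpha>p k a * \<alpha>p k b"
  by (induction k) (auto simp: \<alpha>mult \<alpha>pS)

lemma \<alpha>p0: "\<alpha>p k 0 = 0"
  by (induction k) (auto simp: \<alpha>0)

lemma \<alpha>p_inj: "a \<in> S \<Longrightarrow> b \<in> S \<Longrightarrow> \<alpha>p k a = \<alpha>p k b \<Longrightarrow> a = b"
proof (induction k)
  case 0 then show ?case by simp
next
  case (Suc k)
  then show ?case using bij_betw_imp_inj_on[OF bij] \<alpha>pS by (auto dest: inj_onD)
qed

lemma \<alpha>p_surj: "b \<in> S \<Longrightarrow> \<exists>a\<in>S. \<alpha>p k a = b"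
proof (induction k arbitrary: b)
  case 0 then show ?case by auto
next
  case (Suc k)
  from Suc.prems bij obtain b' where "b' \<in> S" "\<alpha> b' = b" by (metis bij_betw_imp_surj_on imageE)
  with Suc.IH[of b'] show ?case by auto
qed

lemma xpow_comm: "c \<in> S \<Longrightarrow> \<exists>w\<in>P k. x ^ k * c = \<alpha>p k c * x ^ k + w"
proof (induction k)
  case 0 then show ?case using P_zero by simp
next
  case (Suc k)
  then obtain w where w: "w \<in> P k" "x ^ k * c = \<alpha>p k c * x ^ k + w" by blast
  have a: "\<alpha>p k c \<in> S" using \<alpha>pS Suc.prems by blast
  have "x ^ Suc k * c = x * (x ^ k * c)" by (simp add: mult.assoc)
  also have "\<dots> = (x * \<alpha>p k c) * x ^ k + x * w" using w(2) by (simp add: distrib_left mult.assoc)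
  also have "\<dots> = \<alpha>p (Suc k) c * x ^ Suc k + (\<delta> (\<alpha>p k c) * x ^ k + x * w)"
    using comm[OF a] by (simp add: distrib_right mult.assoc)
  finally have "x ^ Suc k * c = \<alpha>p (Suc k) c * x ^ Suc k + (\<delta> (\<alpha>p k c) * x ^ k + x * w)" .
  moreover have "\<delta> (\<alpha>p k c) * x ^ k + x * w \<in> P (Suc k)"
    using P_add P_mon[OF \<delta>S[OF a]] P_lx[OF w(1)] by simp
  ultimately show ?case by blast
qed

lemma lc_decomp:
  assumes g: "g \<in> A" "g \<noteq> 0"
  shows "ore_lc S x g \<in> S \<and> ore_lc S x g \<noteq> 0 \<and>
         (\<exists>v\<in>P (ore_deg S x g). g = ore_lc S x g * x ^ ore_deg S x g + v)"
proof -
  from K0[OF g(1)] obtain N where cS: "\<forall>n. cf g n \<in> S" and N: "\<forall>n\<ge>N. cf g n = 0"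
    and gN: "g = (\<Sum>j<N. cf g j * x ^ j)" by blast
  have ex: "\<exists>j. cf g j \<noteq> 0"
  proof (rule ccontr)
    assume "\<not> ?thesis" then have "(\<Sum>j<N. cf g j * x ^ j) = 0" by simp
    then have "g = 0" by (rule trans[OF gN])
    then show False using g by simp
  qed
  then obtain j0 where j0: "cf g j0 \<noteq> 0" by blast
  have bnd: "\<And>y. cf g y \<noteq> 0 \<Longrightarrow> y \<le> N"
  proof (rule ccontr)
    fix y assume "cf g y \<noteq> 0" "\<not> y \<le> N"
    then show False using N by simp
  qed
  define d where "d = ore_deg S x g"
  have d: "d = (GREATEST n. cf g n \<noteq> 0)" unfolding d_def ore_deg_def cf_def ..
  have cd: "cf g d \<noteq> 0" unfolding d using GreatestI_nat[of "\<lambda>n. cf g n \<noteq> 0", OF j0 bnd] .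
  have gt: "\<And>n. d < n \<Longrightarrow> cf g n = 0"
  proof (rule ccontr)
    fix n assume "d < n" "cf g n \<noteq> 0"
    then show False using Greatest_le_nat[of "\<lambda>n. cf g n \<noteq> 0" n N] bnd unfolding d by auto
  qed
  have dN: "d < N"
  proof (rule ccontr)
    assume "\<not> d < N" then have "N \<le> d" by simp
    then show False using cd N by blast
  qed
  have "(\<Sum>j<N. cf g j * x ^ j) = (\<Sum>j<Suc d. cf g j * x ^ j)"
    by (rule sum.mono_neutral_right) (use dN gt in auto)
  with gN have "g = (\<Sum>j<Suc d. cf g j * x ^ j)" by (rule trans)
  also have "\<dots> = cf g d * x ^ d + (\<Sum>j<d. cf g j * x ^ j)" by (simp add: add.commute)
  finally have "g = cf g d * x ^ d + (\<Sum>j<d. cf g j * x ^ j)" .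
  moreover have "(\<Sum>j<d. cf g j * x ^ j) \<in> P d" unfolding P_def using cS by blast
  moreover have "ore_lc S x g = cf g d" unfolding ore_lc_def cf_def d_def ..
  ultimately show ?thesis using cd cS unfolding d_def by metis
qed

end


context ore begin

lemma part1:
  assumes R: "is_subring R" "R \<subseteq> S" and g: "g \<in> A" "g \<noteq> 0"
    and a1: "ann R (ore_lc S x g) = ann R g"
    and a2: "ann S (ore_lc S x g) = lspan S (ann R (ore_lc S x g))"
  shows "ann A g = lspan A (ann R g)"
proof -
  define p where "p = ore_lc S x g"
  define n where "n = ore_deg S x g"
  from lc_decomp[OF g] obtain g' where p: "p \<in> S" and g': "g' \<in> P n" "g = p * x ^ n + g'"
    unfolding p_def n_def by blast
  have gP: "g \<in> P (Suc n)"
    using P_add[OF P_mon[OF p, of n "Suc n"] P_mono[OF _ g'(1), of "Suc n"]] g'(2) by simp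
  have RA: "R \<subseteq> A" using R SA by auto
  have ap: "ann S p = lspan S (ann R g)" using a1 a2 unfolding p_def by simp
  have main: "\<forall>f\<in>P k. f * g = 0 \<longrightarrow> f \<in> lspan A (ann R g)" for k
  proof (induction k)
    case 0 then show ?case using P0 lspan_zero by auto
  next
    case (Suc k)
    show ?case
    proof (intro ballI impI)
      fix f assume f: "f \<in> P (Suc k)" "f * g = 0"
      from P_Suc[OF f(1)] obtain q f' where qf: "q \<in> S" "f' \<in> P k" "f = q * x ^ k + f'" by blast
      from xpow_comm[OF p, of k] obtain w where w: "w \<in> P k" "x ^ k * p = \<alpha>p k p * x ^ k + w" by blast
      define V where "V = q * (w * x ^ n) + q * (x ^ k * g') + f' * g"
      have V1: "q * (w * x ^ n) \<in> P (k + n)" using P_smult[OF qf(1) P_rx[OF w(1)]] .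
      have V2: "q * (x ^ k * g') \<in> P (k + n)" using P_smult[OF qf(1) P_lxp[OF g'(1), of k]] by (simp add: add.commute)
      have V3: "f' * g \<in> P (k + n)" using P_mul[OF qf(2) gP] .
      have V: "V \<in> P (k + n)" unfolding V_def using P_add V1 V2 V3 by simp
      have e1: "f * g = q * x ^ k * g + f' * g" by (simp add: qf(3) distrib_right)
      have e2: "q * x ^ k * g = q * (x ^ k * p) * x ^ n + q * (x ^ k * g')"
        by (subst g'(2)) (simp add: distrib_left mult.assoc)
      have e3: "q * (x ^ k * p) * x ^ n = (q * \<alpha>p k p) * x ^ (k + n) + q * (w * x ^ n)"
        by (simp add: w(2) distrib_left distrib_right mult.assoc power_add)
      have "(q * \<alpha>p k p) * x ^ (k + n) + V = 0 * x ^ (k + n) + 0"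
        using f(2) e1 e2 e3 unfolding V_def by (simp add: add.assoc)
      then have qa: "q * \<alpha>p k p = 0"
        using P_coef[OF subring_mult[OF subS qf(1) \<alpha>pS[OF p]] V subring_0[OF subS] P_zero] by simp
      obtain q' where q': "q' \<in> S" "\<alpha>p k q' = q" using \<alpha>p_surj[OF qf(1)] by blast
      have "\<alpha>p k (q' * p) = \<alpha>p k 0" using \<alpha>p_mult[OF q'(1) p] \<alpha>p0 qa q'(2) by simp
      then have "q' * p = 0" using \<alpha>p_inj[OF subring_mult[OF subS q'(1) p] subring_0[OF subS]] by simp
      then have "q' \<in> ann S p" unfolding ann_def using q'(1) by simp
      then have q'L: "q' \<in> lspan S (ann R g)" using ap by simp
      define h where "h = x ^ k * q'"
      have hL: "h \<in> lspan A (ann R g)" unfolding h_def using lspan_lmul[OF subA SA xpowA q'L] .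
      have hg: "h * g = 0" using lspan_ann_sub[OF subA RA] hL unfolding ann_def by auto
      from xpow_comm[OF q'(1), of k] obtain w' where w': "w' \<in> P k" "h = q * x ^ k + w'"
        unfolding h_def q'(2) by blast
      have "f - h = f' - w'" using qf(3) w'(2) by simp
      then have fh: "f - h \<in> P k" using P_diff[OF qf(2) w'(1)] by simp
      have "(f - h) * g = 0" by (simp add: left_diff_distrib f(2) hg)
      then have "f - h \<in> lspan A (ann R g)" using Suc.IH fh by blast
      then show "f \<in> lspan A (ann R g)" using lspan_add[OF _ hL] by fastforce
    qed
  qed
  show ?thesis
  proof (rule ann_eq_lspan[OF subA RA])
    show "ann A g \<subseteq> lspan A (ann R g)"
    proof
      fix f assume "f \<in> ann A g"
      then have f: "f \<in> A" "f * g = 0" unfolding ann_def by auto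
      from P_ex[OF f(1)] obtain k where "f \<in> P k" by blast
      then show "f \<in> lspan A (ann R g)" using main f(2) by blast
    qed
  qed
qed

end

locale ore_free = ore +
  fixes R TS :: "'a set"
  assumes subR: "is_subring R" and RS: "R \<subseteq> S" and freeS: "free_on R S TS"
begin

abbreviation BB where "BB \<equiv> {l * x ^ n | l n. l \<in> TS}"
abbreviation \<phi> where "\<phi> \<equiv> (\<lambda>(l, n::nat). l * x ^ n)"

lemma BB_eq: "BB = \<phi> ` (TS \<times> UNIV)" by auto

lemma TS_S: "TS \<subseteq> S" using freeS unfolding free_on_def by blast

lemma TS_nz: "0 \<notin> TS"
proof
  assume z: "0 \<in> TS"
  define c where "c = (\<lambda>b::'a. if b = 0 then (1::'a) else 0)"
  have "is_coeffs R TS c" unfolding is_coeffs_def c_def using z subring_1[OF subR] by auto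
  moreover have "lin_comb c = 0" by (subst lin_comb_eq[of "{0}"]) (auto simp: c_def)
  ultimately have "c = (\<lambda>_. 0)" using freeS is_coeffs_zero lin_comb_zero unfolding free_on_def by metis
  then show False using nontriv unfolding c_def by metis
qed

lemma mono_cf: assumes "l \<in> S" shows "cf (l * x ^ n) j = (if j = n then l else 0)"
proof -
  define t where "t = (\<lambda>i. if i = n then l else 0)"
  have "(\<Sum>i<Suc n. t i * x ^ i) = (\<Sum>i<Suc n. if i = n then l * x ^ n else 0)"
    by (rule sum.cong) (auto simp: t_def)
  also have "\<dots> = l * x ^ n" by simp
  finally have e: "(\<Sum>i<Suc n. t i * x ^ i) = l * x ^ n" .
  have tS: "\<And>i. t i \<in> S" using assms subring_0[OF subS] by (simp add: t_def)
  show ?thesis using K1[of t "Suc n" j, OF tS] unfolding e by (auto simp: t_def)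
qed

lemma phi_inj: assumes "l \<in> TS" "l' \<in> TS" "l * x ^ n = l' * x ^ m" shows "l = l' \<and> n = m"
proof -
  have "cf (l * x ^ n) n = l" using mono_cf TS_S assms(1) by auto
  moreover have "cf (l' * x ^ m) n = (if n = m then l' else 0)" using mono_cf TS_S assms(2) by auto
  ultimately have "l = (if n = m then l' else 0)" using assms(3) by simp
  then show ?thesis using TS_nz assms(1) by (auto split: if_splits)
qed

lemma phi_inj_on: "inj_on \<phi> (TS \<times> UNIV)"
  by (auto intro!: inj_onI dest: phi_inj)

lemma DS:
  assumes L: "finite L" "L \<subseteq> TS" and sub: "{b. c b \<noteq> 0} \<subseteq> \<phi> ` (L \<times> {..<N})"
  shows "lin_comb c = (\<Sum>n<N. (\<Sum>l\<in>L. c (l * x ^ n) * l) * x ^ n)"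
proof -
  have inj: "inj_on \<phi> (L \<times> {..<N})" using inj_on_subset[OF phi_inj_on] L(2) by blast
  have "lin_comb c = (\<Sum>b\<in>\<phi> ` (L \<times> {..<N}). c b * b)" by (rule lin_comb_eq) (use L sub in auto)
  also have "\<dots> = (\<Sum>z\<in>L \<times> {..<N}. c (\<phi> z) * \<phi> z)" by (subst sum.reindex[OF inj]) simp
  also have "\<dots> = (\<Sum>l\<in>L. \<Sum>n<N. c (l * x ^ n) * (l * x ^ n))"
    by (subst sum.cartesian_product) (simp add: case_prod_beta)
  also have "\<dots> = (\<Sum>n<N. \<Sum>l\<in>L. c (l * x ^ n) * (l * x ^ n))" by (rule sum.swap)
  also have "\<dots> = (\<Sum>n<N. (\<Sum>l\<in>L. c (l * x ^ n) * l) * x ^ n)"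
    by (simp add: sum_distrib_right mult.assoc)
  finally show ?thesis .
qed

lemma G:
  assumes c: "is_coeffs R BB c" and l: "l \<in> TS"
  shows "c (l * x ^ n) = coef R TS (cf (lin_comb c) n) l"
proof -
  have fin: "finite {b. c b \<noteq> 0}" and cB: "\<And>b. c b \<noteq> 0 \<Longrightarrow> b \<in> BB \<and> c b \<in> R"
    using c unfolding is_coeffs_def by auto
  have "{b. c b \<noteq> 0} \<subseteq> \<phi> ` (TS \<times> UNIV)" using cB BB_eq by blast
  from finite_subset_image[OF fin this] obtain E where E: "E \<subseteq> TS \<times> UNIV" "finite E"
    "{b. c b \<noteq> 0} = \<phi> ` E" by blast
  have "finite (snd ` E)" using E(2) by simp
  then obtain N0 where N0: "\<forall>m\<in>snd ` E. m < N0" using finite_nat_set_iff_bounded by blast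
  define L where "L = insert l (fst ` E)"
  define N where "N = N0 + Suc n"
  have L: "finite L" "L \<subseteq> TS" using E l unfolding L_def by auto
  have sub: "{b. c b \<noteq> 0} \<subseteq> \<phi> ` (L \<times> {..<N})"
  proof
    fix b assume "b \<in> {b. c b \<noteq> 0}"
    then obtain z where z: "z \<in> E" "b = \<phi> z" using E(3) by blast
    obtain l1 n1 where zz: "z = (l1, n1)" by (cases z)
    have "n1 < N0" using N0 z(1) zz by force
    then have "z \<in> L \<times> {..<N}" using z(1) zz unfolding L_def N_def by force
    then show "b \<in> \<phi> ` (L \<times> {..<N})" using z by blast
  qed
  define d where "d = (\<lambda>j. \<Sum>l'\<in>L. c (l' * x ^ j) * l')"
  have cS: "\<And>b. c b \<in> S"
  proof -
    fix b show "c b \<in> S" using cB[of b] RS subring_0[OF subS] by (cases "c b = 0") auto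
  qed
  have dS: "\<And>j. d j \<in> S" unfolding d_def using cS L(2) TS_S
    by (auto intro!: subring_sum[OF subS] subring_mult[OF subS])
  have lc: "lin_comb c = (\<Sum>j<N. d j * x ^ j)" unfolding d_def using DS[OF L sub] .
  have cfn: "cf (lin_comb c) n = d n" unfolding lc K1[of d, OF dS] N_def by simp
  define e where "e = (\<lambda>l'. if l' \<in> L then c (l' * x ^ n) else 0)"
  have ie: "is_coeffs R TS e" unfolding is_coeffs_def
  proof (intro conjI allI impI)
    show "finite {b. e b \<noteq> 0}" using L(1) by (rule finite_subset[rotated]) (auto simp: e_def)
  next
    fix b assume "e b \<noteq> 0" then show "b \<in> TS" using L(2) by (auto simp: e_def split: if_splits)
  next
    fix b assume "e b \<noteq> 0" then show "e b \<in> R" using cB by (auto simp: e_def split: if_splits)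
  qed
  have "lin_comb e = (\<Sum>l'\<in>L. e l' * l')" by (rule lin_comb_eq) (use L in \<open>auto simp: e_def\<close>)
  also have "\<dots> = d n" unfolding d_def by (rule sum.cong) (auto simp: e_def)
  finally have "coef R TS (d n) = e" using free_coef_eq[OF freeS ie] by simp
  then show ?thesis using cfn by (simp add: e_def L_def)
qed

lemma E:
  assumes g: "g \<in> A"
  shows "\<exists>c. is_coeffs R BB c \<and> g = lin_comb c"
proof -
  from K0[OF g] obtain N where cS: "\<forall>n. cf g n \<in> S" and N: "\<forall>n\<ge>N. cf g n = 0"
    and gN: "g = (\<Sum>j<N. cf g j * x ^ j)" by blast
  define e where "e = (\<lambda>j. coef R TS (cf g j))"
  have e: "\<And>j. is_coeffs R TS (e j) \<and> cf g j = lin_comb (e j)"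
    unfolding e_def using free_coef[OF freeS] cS by blast
  define L where "L = (\<Union>j<N. {l. e j l \<noteq> 0})"
  have L: "finite L" "L \<subseteq> TS" unfolding L_def using e unfolding is_coeffs_def by auto
  define c where "c = (\<lambda>b. if b \<in> \<phi> ` (TS \<times> UNIV)
      then (case inv_into (TS \<times> UNIV) \<phi> b of (l, n) \<Rightarrow> e n l) else 0)"
  have cphi: "\<And>l n. l \<in> TS \<Longrightarrow> c (l * x ^ n) = e n l"
  proof -
    fix l n assume l: "l \<in> TS"
    have "inv_into (TS \<times> UNIV) \<phi> (\<phi> (l, n)) = (l, n)"
      by (rule inv_into_f_f[OF phi_inj_on]) (use l in auto)
    then show "c (l * x ^ n) = e n l" unfolding c_def using l by force
  qed
  have ez: "\<And>n l. N \<le> n \<Longrightarrow> e n l = 0" unfolding e_def using N coef_zero[OF freeS] by simp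
  have sub: "{b. c b \<noteq> 0} \<subseteq> \<phi> ` (L \<times> {..<N})"
  proof
    fix b assume b: "b \<in> {b. c b \<noteq> 0}"
    then have "b \<in> \<phi> ` (TS \<times> UNIV)" unfolding c_def by (auto split: if_splits)
    then obtain l n where ln: "l \<in> TS" "b = l * x ^ n" by auto
    then have nz: "e n l \<noteq> 0" using b cphi by auto
    then have "n < N" using ez[of n l] by (cases "N \<le> n") auto
    then have "l \<in> L" using nz unfolding L_def by auto
    then show "b \<in> \<phi> ` (L \<times> {..<N})" using ln \<open>n < N\<close> by auto
  qed
  have ic: "is_coeffs R BB c" unfolding is_coeffs_def
  proof (intro conjI allI impI)
    show "finite {b. c b \<noteq> 0}" using L(1) by (rule finite_subset[OF sub, OF finite_imageI[OF finite_cartesian_product]]) simp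
  next
    fix b assume "c b \<noteq> 0"
    then show "b \<in> BB" unfolding c_def by (auto split: if_splits)
  next
    fix b assume b: "c b \<noteq> 0"
    then obtain l n where ln: "l \<in> TS" "b = l * x ^ n" unfolding c_def by (auto split: if_splits)
    then have "c b = e n l" using cphi by simp
    then show "c b \<in> R" using b e[of n] unfolding is_coeffs_def by auto
  qed
  have "lin_comb c = (\<Sum>n<N. (\<Sum>l\<in>L. c (l * x ^ n) * l) * x ^ n)" using DS[OF L sub] .
  also have "\<dots> = (\<Sum>n<N. cf g n * x ^ n)"
  proof (rule sum.cong[OF refl])
    fix n assume n: "n \<in> {..<N}"
    have "(\<Sum>l\<in>L. c (l * x ^ n) * l) = (\<Sum>l\<in>L. e n l * l)"
      by (rule sum.cong) (use L(2) cphi in auto)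
    also have "\<dots> = lin_comb (e n)" by (rule lin_comb_eq[symmetric]) (use L n in \<open>auto simp: L_def\<close>)
    also have "\<dots> = cf g n" using e by simp
    finally show "(\<Sum>l\<in>L. c (l * x ^ n) * l) * x ^ n = cf g n * x ^ n" by simp
  qed
  finally have L: "lin_comb c = (\<Sum>n<N. cf g n * x ^ n)" .
  have "g = lin_comb c" using trans[OF gN L[symmetric]] .
  then show ?thesis using ic by blast
qed

lemma freeB: "free_on R A BB"
  unfolding free_on_def
proof (intro conjI allI impI)
  show "BB \<subseteq> A" using TS_S SA by (auto intro!: subring_mult[OF subA] xpowA)
next
  fix m
  show "m \<in> A \<longleftrightarrow> (\<exists>c. is_coeffs R BB c \<and> m = lin_comb c)"
  proof
    assume "m \<in> A" then show "\<exists>c. is_coeffs R BB c \<and> m = lin_comb c" using E by blast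
  next
    assume "\<exists>c. is_coeffs R BB c \<and> m = lin_comb c"
    then obtain c where c: "is_coeffs R BB c" "m = lin_comb c" by blast
    have "\<And>b. c b \<noteq> 0 \<Longrightarrow> c b * b \<in> A" using c(1) RS SA TS_S unfolding is_coeffs_def
      by (force intro!: subring_mult[OF subA] xpowA)
    then show "m \<in> A" unfolding c(2) lin_comb_def by (auto intro!: subring_sum[OF subA])
  qed
next
  fix c c' assume c: "is_coeffs R BB c" "is_coeffs R BB c'" "lin_comb c = lin_comb c'"
  show "c = c'"
  proof
    fix b show "c b = c' b"
    proof (cases "b \<in> BB")
      case True
      then obtain l n where "l \<in> TS" "b = l * x ^ n" by blast
      then show ?thesis using G[OF c(1)] G[OF c(2)] c(3) by simp
    next
      case False
      then have "c b = 0" "c' b = 0" using c(1,2) unfolding is_coeffs_def by blast+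
      then show ?thesis by simp
    qed
  qed
qed

lemma coefB: assumes "g \<in> A" "l \<in> TS" shows "coef R BB g (l * x ^ n) = coef R TS (cf g n) l"
proof -
  from free_coef[OF freeB assms(1)] have c: "is_coeffs R BB (coef R BB g)" "g = lin_comb (coef R BB g)" by auto
  from G[OF c(1) assms(2), of n] c(2) show ?thesis by simp
qed

lemma part2:
  assumes g: "g \<in> A" and ng: "nice R A BB g"
  shows "nice R S TS (ore_lc S x g) \<and> ann R (ore_lc S x g) = ann R g"
proof -
  have g0: "g \<noteq> 0" using ng unfolding nice_def by blast
  define p where "p = ore_lc S x g"
  define d where "d = ore_deg S x g"
  from lc_decomp[OF g g0] have p: "p \<in> S" "p \<noteq> 0" unfolding p_def by auto
  have pcf: "p = cf g d" unfolding p_def d_def ore_lc_def cf_def ..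
  have inTS: "\<And>l. coef R TS p l \<noteq> 0 \<Longrightarrow> l \<in> TS"
    using free_coef[OF freeS p(1)] unfolding is_coeffs_def by blast
  have cB: "\<And>l. l \<in> TS \<Longrightarrow> coef R TS p l = coef R BB g (l * x ^ d)"
    using coefB[OF g] pcf by simp
  have np: "nice R S TS p" unfolding nice_def
  proof (intro conjI allI impI)
    fix l l' assume a: "coef R TS p l \<noteq> 0" "coef R TS p l' \<noteq> 0"
    show "ann R (coef R TS p l) = ann R (coef R TS p l')"
    proof -
      have lT: "l \<in> TS" "l' \<in> TS" using inTS a by auto
      have "coef R BB g (l * x ^ d) \<noteq> 0" "coef R BB g (l' * x ^ d) \<noteq> 0"
        using a cB[OF lT(1)] cB[OF lT(2)] by simp_all
      then have "ann R (coef R BB g (l * x ^ d)) = ann R (coef R BB g (l' * x ^ d))"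
        using ng unfolding nice_def by blast
      then show ?thesis using cB[OF lT(1)] cB[OF lT(2)] by simp
    qed
  qed (use p in auto)
  obtain l where l: "coef R TS p l \<noteq> 0" using nice_ex[OF freeS np] by blast
  have "ann R p = ann R (coef R TS p l)" using nice_ann[OF subR freeS np l] .
  also have "\<dots> = ann R (coef R BB g (l * x ^ d))" using cB inTS[OF l] by simp
  also have "\<dots> = ann R g" using nice_ann[OF subR freeB ng] l cB inTS[OF l] by simp
  finally show ?thesis using np unfolding p_def by simp
qed

end


lemma one_std: "1 \<in> std_terms x D"
  unfolding std_terms_def by (rule CollectI, rule exI[of _ "[]"]) simp

lemma std_mono: "D \<subseteq> D' \<Longrightarrow> std_terms x D \<subseteq> std_terms x D'"
  unfolding std_terms_def by blast

lemma std_succ: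
  fixes x :: "'i::linorder \<Rightarrow> 'a::ring_1"
  shows "std_terms x {s. s \<le> k} = {l * x k ^ n | l n. l \<in> std_terms x {s. s < k}}"
proof (intro set_eqI iffI)
  fix y assume "y \<in> std_terms x {s. s \<le> k}"
  then obtain ys where ys: "y = prod_list (map x ys)" "sorted ys" "set ys \<subseteq> {s. s \<le> k}"
    unfolding std_terms_def by blast
  define xs where "xs = takeWhile (\<lambda>s. s < k) ys"
  define zs where "zs = dropWhile (\<lambda>s. s < k) ys"
  have yxz: "ys = xs @ zs" unfolding xs_def zs_def by simp
  have zk: "\<forall>z\<in>set zs. z = k"
  proof (cases "zs = []")
    case False
    then obtain z0 zr where zc: "zs = z0 # zr" by (cases zs) auto
    have "\<not> z0 < k" using hd_dropWhile[of "\<lambda>s. s < k" ys] False zc unfolding zs_def by simp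
    moreover have "sorted zs" unfolding zs_def using sorted_dropWhile[OF ys(2)] .
    moreover have "set zs \<subseteq> {s. s \<le> k}" using ys(3) unfolding zs_def by (meson set_dropWhileD subset_iff)
    ultimately show ?thesis using zc by (auto simp: not_less intro!: order.antisym)
  qed simp
  then have "zs = replicate (length zs) k" by (simp add: replicate_length_same)
  then have "y = prod_list (map x xs) * x k ^ length zs"
    using ys(1) yxz by (metis map_append map_replicate prod_list.append prod_list_replicate)
  moreover have "prod_list (map x xs) \<in> std_terms x {s. s < k}"
    unfolding std_terms_def xs_def using sorted_takeWhile[OF ys(2)]
    by (auto dest: set_takeWhileD)
  ultimately show "y \<in> {l * x k ^ n | l n. l \<in> std_terms x {s. s < k}}" by blast
next
  fix y assume "y \<in> {l * x k ^ n | l n. l \<in> std_terms x {s. s < k}}"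
  then obtain xs n where xs: "y = prod_list (map x xs) * x k ^ n" "sorted xs" "set xs \<subseteq> {s. s < k}"
    unfolding std_terms_def by blast
  define ys where "ys = xs @ replicate n k"
  have "sorted ys" unfolding ys_def using xs(2,3) by (auto simp: sorted_append)
  moreover have "set ys \<subseteq> {s. s \<le> k}" unfolding ys_def using xs(3) by auto
  moreover have "y = prod_list (map x ys)" unfolding ys_def using xs(1) by simp
  ultimately show "y \<in> std_terms x {s. s \<le> k}" unfolding std_terms_def by blast
qed

locale skew =
  fixes R :: "'a::ring_1 set" and x :: "'i::wellorder \<Rightarrow> 'a" and \<alpha> \<delta> :: "'i \<Rightarrow> 'a \<Rightarrow> 'a"
    and Sk :: "'i set \<Rightarrow> 'a set"
  assumes sk: "skew_setting R x \<alpha> \<delta> Sk"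
begin

lemma subR: "is_subring R" and subU: "is_subring (Sk UNIV)" and S0: "Sk {} = R"
  and freeL: "\<And>k. free_on R (Sk {s. s < k}) (std_terms x {s. s < k})"
  and freeU: "free_on R (Sk UNIV) (std_terms x UNIV)"
  and oreK: "\<And>k. ore_ext (Sk {s. s < k}) (Sk {s. s \<le> k}) (x k) (\<alpha> k) (\<delta> k)"
  and lim: "\<And>k. (\<exists>\<eta>. \<eta> < k) \<Longrightarrow> (\<forall>\<eta><k. \<exists>\<eta>'<k. \<eta> < \<eta>') \<Longrightarrow>
             Sk {s. s < k} = (\<Union>\<eta>\<in>{\<eta>. \<eta> < k}. Sk {s. s < \<eta>})"
  and limU: "(\<forall>\<eta>::'i. \<exists>\<eta>'. \<eta> < \<eta>') \<Longrightarrow> Sk UNIV = (\<Union>\<eta>. Sk {s. s < \<eta>})"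
  using sk unfolding skew_setting_def by auto

lemma RSl: "R \<subseteq> Sk {s. s < k}" using free_sub[OF freeL one_std] .

lemma ore_free_k: "ore_free (Sk {s. s < k}) (Sk {s. s \<le> k}) (x k) (\<alpha> k) (\<delta> k) R (std_terms x {s. s < k})"
  using oreK[of k] subR RSl freeL[of k] by unfold_locales auto

lemma cases3:
  fixes k :: 'i
  obtains (min) "\<not> (\<exists>\<eta>. \<eta> < k)"
    | (succ) \<eta> where "\<eta> < k" "{s. s < k} = {s. s \<le> \<eta>}"
    | (limit) "\<exists>\<eta>. \<eta> < k" "\<forall>\<eta><k. \<exists>\<eta>'<k. \<eta> < \<eta>'"
proof -
  consider "\<not> (\<exists>\<eta>. \<eta> < k)" | "\<exists>\<eta><k. \<forall>\<eta>'<k. \<eta>' \<le> \<eta>"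
    | "(\<exists>\<eta>. \<eta> < k) \<and> \<not> (\<exists>\<eta><k. \<forall>\<eta>'<k. \<eta>' \<le> \<eta>)" by blast
  then show ?thesis
  proof cases
    case 1 then show ?thesis using min by blast
  next
    case 2
    then obtain \<eta> where "\<eta> < k" "\<forall>\<eta>'<k. \<eta>' \<le> \<eta>" by blast
    moreover then have "{s. s < k} = {s. s \<le> \<eta>}" using le_less_trans by blast
    ultimately show ?thesis using succ by blast
  next
    case 3 then show ?thesis using limit by (meson not_le)
  qed
qed

lemma Sl_mono: "\<eta> \<le> k \<Longrightarrow> Sk {s. s < \<eta>} \<subseteq> Sk {s. s < k}"
proof (induction k arbitrary: \<eta> rule: less_induct)
  case (less k)
  show ?case
  proof (cases "\<eta> = k")
    case False
    then have lt: "\<eta> < k" using less.prems by simp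
    show ?thesis
    proof (cases k rule: cases3)
      case min then show ?thesis using lt by blast
    next
      case (succ k')
      have "\<eta> \<le> k'" using lt succ(2) by blast
      then have "Sk {s. s < \<eta>} \<subseteq> Sk {s. s < k'}" using less.IH[OF succ(1)] by blast
      also have "\<dots> \<subseteq> Sk {s. s \<le> k'}" using oreK[of k'] unfolding ore_ext_def by blast
      also have "\<dots> = Sk {s. s < k}" using succ(2) by simp
      finally show ?thesis .
    next
      case limit
      then show ?thesis using lim[of k] lt by blast
    qed
  qed simp
qed

definition Q :: "'a set \<Rightarrow> 'a set \<Rightarrow> bool" where
  "Q M T \<longleftrightarrow> (\<forall>g. nice R M T g \<longrightarrow> ann M g = lspan M (ann R g))"

lemma stepQ:
  assumes "Q (Sk {s. s < k}) (std_terms x {s. s < k})"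
  shows "Q (Sk {s. s \<le> k}) (std_terms x {s. s \<le> k})"
  unfolding Q_def
proof (intro allI impI)
  fix g assume ng: "nice R (Sk {s. s \<le> k}) (std_terms x {s. s \<le> k}) g"
  interpret F: ore_free "Sk {s. s < k}" "Sk {s. s \<le> k}" "x k" "\<alpha> k" "\<delta> k" R "std_terms x {s. s < k}"
    using ore_free_k .
  have g: "g \<in> Sk {s. s \<le> k}" "g \<noteq> 0" using ng unfolding nice_def by auto
  have ng': "nice R (Sk {s. s \<le> k}) F.BB g" using ng unfolding std_succ .
  from F.part2[OF g(1) ng'] have p:
    "nice R (Sk {s. s < k}) (std_terms x {s. s < k}) (ore_lc (Sk {s. s < k}) (x k) g)"
    "ann R (ore_lc (Sk {s. s < k}) (x k) g) = ann R g" by auto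
  have "ann (Sk {s. s < k}) (ore_lc (Sk {s. s < k}) (x k) g)
      = lspan (Sk {s. s < k}) (ann R (ore_lc (Sk {s. s < k}) (x k) g))"
    using assms p(1) unfolding Q_def by blast
  then show "ann (Sk {s. s \<le> k}) g = lspan (Sk {s. s \<le> k}) (ann R g)"
    using F.part1[OF subR F.RS g p(2)] by blast
qed

lemma union_case:
  assumes M: "is_subring M" "R \<subseteq> M" "free_on R M T"
    and cover: "\<forall>m\<in>M. \<exists>\<eta>\<in>I. m \<in> Sk {s. s < \<eta>}"
    and dir: "\<forall>\<eta>1\<in>I. \<forall>\<eta>2\<in>I. max \<eta>1 \<eta>2 \<in> I"
    and subs: "\<forall>\<eta>\<in>I. Sk {s. s < \<eta>} \<subseteq> M \<and> std_terms x {s. s < \<eta>} \<subseteq> T"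
    and IH: "\<forall>\<eta>\<in>I. Q (Sk {s. s < \<eta>}) (std_terms x {s. s < \<eta>})"
  shows "Q M T"
  unfolding Q_def
proof (intro allI impI)
  fix g assume ng: "nice R M T g"
  have gM: "g \<in> M" using ng unfolding nice_def by auto
  show "ann M g = lspan M (ann R g)"
  proof (rule ann_eq_lspan[OF M(1,2)], rule subsetI)
    fix f assume "f \<in> ann M g"
    then have f: "f \<in> M" "f * g = 0" unfolding ann_def by auto
    obtain \<eta>1 where e1: "\<eta>1 \<in> I" "g \<in> Sk {s. s < \<eta>1}" using cover gM by blast
    obtain \<eta>2 where e2: "\<eta>2 \<in> I" "f \<in> Sk {s. s < \<eta>2}" using cover f(1) by blast
    define \<eta> where "\<eta> = max \<eta>1 \<eta>2"
    have eI: "\<eta> \<in> I" using dir e1 e2 unfolding \<eta>_def by blast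
    have gS: "g \<in> Sk {s. s < \<eta>}" using Sl_mono[of \<eta>1 \<eta>] e1 unfolding \<eta>_def by auto
    have fS: "f \<in> Sk {s. s < \<eta>}" using Sl_mono[of \<eta>2 \<eta>] e2 unfolding \<eta>_def by auto
    have "nice R (Sk {s. s < \<eta>}) (std_terms x {s. s < \<eta>}) g"
      using nice_mono[OF freeL M(3)] subs eI gS ng by blast
    then have "ann (Sk {s. s < \<eta>}) g = lspan (Sk {s. s < \<eta>}) (ann R g)"
      using IH eI unfolding Q_def by blast
    moreover have "f \<in> ann (Sk {s. s < \<eta>}) g" using fS f(2) unfolding ann_def by auto
    ultimately have "f \<in> lspan (Sk {s. s < \<eta>}) (ann R g)" by simp
    then show "f \<in> lspan M (ann R g)" using lspan_mono subs eI by blast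
  qed
qed

lemma Qall: "Q (Sk {s. s < k}) (std_terms x {s. s < k})"
proof (induction k rule: less_induct)
  case (less k)
  show ?case
  proof (cases k rule: cases3)
    case min
    then have e: "{s. s < k} = {}" by auto
    show ?thesis unfolding Q_def e S0
    proof (intro allI impI)
      fix g
      have "ann R g \<subseteq> lspan R (ann R g)"
      proof
        fix a assume "a \<in> ann R g"
        then show "a \<in> lspan R (ann R g)" using lspan_mem[OF subring_1[OF subR], of a] by simp
      qed
      then show "ann R g = lspan R (ann R g)" using ann_eq_lspan[OF subR] by blast
    qed
  next
    case (succ k')
    then show ?thesis using stepQ[OF less.IH[OF succ(1)]] by simp
  next
    case limit
    show ?thesis
    proof (rule union_case[where I = "{\<eta>. \<eta> < k}"])
      show "is_subring (Sk {s. s < k})" using oreK[of k] unfolding ore_ext_def by blast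
      show "R \<subseteq> Sk {s. s < k}" using RSl .
      show "free_on R (Sk {s. s < k}) (std_terms x {s. s < k})" using freeL .
      show "\<forall>m\<in>Sk {s. s < k}. \<exists>\<eta>\<in>{\<eta>. \<eta> < k}. m \<in> Sk {s. s < \<eta>}" using lim[OF limit] by blast
      show "\<forall>\<eta>1\<in>{\<eta>. \<eta> < k}. \<forall>\<eta>2\<in>{\<eta>. \<eta> < k}. max \<eta>1 \<eta>2 \<in> {\<eta>. \<eta> < k}" by (simp add: max_def)
      show "\<forall>\<eta>\<in>{\<eta>. \<eta> < k}. Sk {s. s < \<eta>} \<subseteq> Sk {s. s < k} \<and> std_terms x {s. s < \<eta>} \<subseteq> std_terms x {s. s < k}"
        using Sl_mono std_mono by (auto intro!: std_mono)
      show "\<forall>\<eta>\<in>{\<eta>. \<eta> < k}. Q (Sk {s. s < \<eta>}) (std_terms x {s. s < \<eta>})" using less.IH by blast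
    qed
  qed
qed

lemma part3: "Q (Sk UNIV) (std_terms x UNIV)"
proof (cases "\<exists>m::'i. \<forall>\<eta>. \<eta> \<le> m")
  case True
  then obtain m :: 'i where m: "\<forall>\<eta>. \<eta> \<le> m" by blast
  then have "{s. s \<le> m} = UNIV" by auto
  then show ?thesis using stepQ[OF Qall[of m]] by simp
next
  case False
  then have nm: "\<forall>\<eta>::'i. \<exists>\<eta>'. \<eta> < \<eta>'" by (meson not_le)
  have RU: "R \<subseteq> Sk UNIV" using free_sub[OF freeU one_std] .
  have sU: "\<And>\<eta>. Sk {s. s < \<eta>} \<subseteq> Sk UNIV" using limU[OF nm] by blast
  show ?thesis
  proof (rule union_case[where I = UNIV, OF subU RU freeU])
    show "\<forall>m\<in>Sk UNIV. \<exists>\<eta>\<in>UNIV. m \<in> Sk {s. s < \<eta>}" using limU[OF nm] by blast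
    show "\<forall>\<eta>\<in>UNIV. Sk {s. s < \<eta>} \<subseteq> Sk UNIV \<and> std_terms x {s. s < \<eta>} \<subseteq> std_terms x UNIV"
      using sU std_mono by blast
    show "\<forall>\<eta>\<in>UNIV. Q (Sk {s. s < \<eta>}) (std_terms x {s. s < \<eta>})" using Qall by blast
  qed simp
qed

end

theorem mainTheorem10:
  shows "(\<forall>(R::'a::ring_1 set) S TS A x \<alpha> \<delta> g.
            is_subring R \<and> is_subring S \<and> R \<subseteq> S \<and> free_on R S TS \<and> ore_ext S A x \<alpha> \<delta> \<and>
            g \<in> A \<and> g \<noteq> 0 \<and>
            nice R S TS (ore_lc S x g) \<and> ann R (ore_lc S x g) = ann R g \<and>
            ann S (ore_lc S x g) = lspan S (ann R (ore_lc S x g))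
            \<longrightarrow> ann A g = lspan A (ann R g))
       \<and> (\<forall>(R::'a::ring_1 set) S TS A x \<alpha> \<delta> g.
            is_subring R \<and> is_subring S \<and> R \<subseteq> S \<and> free_on R S TS \<and> ore_ext S A x \<alpha> \<delta> \<and>
            g \<in> A \<and> nice R A {l * x ^ n | l n. l \<in> TS} g
            \<longrightarrow> nice R S TS (ore_lc S x g) \<and> ann R (ore_lc S x g) = ann R g)
       \<and> (\<forall>(R::'a::ring_1 set) (x::'i::wellorder \<Rightarrow> 'a) \<alpha> \<delta> Sk g.
            skew_setting R x \<alpha> \<delta> Sk \<and> nice R (Sk UNIV) (std_terms x UNIV) g
            \<longrightarrow> ann (Sk UNIV) g = lspan (Sk UNIV) (ann R g))"
proof (rule conjI[OF _ conjI]; intro allI impI)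
  fix R S TS A x \<alpha> \<delta> g
  assume h: "is_subring R \<and> is_subring S \<and> R \<subseteq> S \<and> free_on R S TS \<and> ore_ext S A x \<alpha> \<delta> \<and>
            g \<in> A \<and> g \<noteq> 0 \<and>
            nice R S TS (ore_lc S x g) \<and> ann R (ore_lc S x g) = ann R g \<and>
            ann S (ore_lc S x g) = lspan S (ann R (ore_lc S x g))"
  interpret O: ore S A x \<alpha> \<delta> by (rule ore.intro) (use h in blast)
  show "ann A g = lspan A (ann R g)" using O.part1 h by blast
next
  fix R S TS A x \<alpha> \<delta> g
  assume h: "is_subring R \<and> is_subring S \<and> R \<subseteq> S \<and> free_on R S TS \<and> ore_ext S A x \<alpha> \<delta> \<and>
            g \<in> A \<and> nice R A {l * x ^ n | l n. l \<in> TS} g"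
  interpret F: ore_free S A x \<alpha> \<delta> R TS
    by (intro ore_free.intro ore.intro ore_free_axioms.intro) (use h in blast)+
  show "nice R S TS (ore_lc S x g) \<and> ann R (ore_lc S x g) = ann R g" using F.part2 h by blast
next
  fix R :: "'a set" and x :: "'i \<Rightarrow> 'a" and \<alpha> \<delta> Sk g
  assume h: "skew_setting R x \<alpha> \<delta> Sk \<and> nice R (Sk UNIV) (std_terms x UNIV) g"
  interpret K: skew R x \<alpha> \<delta> Sk by (rule skew.intro) (use h in blast)
  show "ann (Sk UNIV) g = lspan (Sk UNIV) (ann R g)" using K.part3 h unfolding K.Q_def by blast
qed

end
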